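(* Let $G=(V,E)$ be a finite undirected unweighted simple graph and let $u\in V$. Let $\mathcal{F}$ be the set of all spanning rooted forests of $G$, let $\mathcal{F}_{uu}$ be the set of spanning rooted forests of $G$ in which $u$ is a root, and define $$\mathcal{S}_u=\{(F,v^* )\;:\;F\in\mathcal{F}_{uu},\ v^*\in T(F,u)\},$$ where $T(F,u)$ denotes the tree of $F$ rooted at $u$ (so $v^*$ ranges over the vertices of that tree). Then $|\mathcal{S}_u|=|\mathcal{F}|$.
   Context: A spanning forest of $G=(V,E)$ is an acyclic subgraph $(V,E')$ with $E'\subseteq E$ (same vertex set as $G$); each connected component is a tree. A spanning rooted forest is a spanning forest together with a choice of one root vertex in each of its trees. Two spanning rooted forests are equal iff they have the same edge set and the same set of roots. *)

theory Defs
  imports Main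
begin

definition simple_graph :: "'a set \<Rightarrow> 'a set set \<Rightarrow> bool" where
  "simple_graph V E \<longleftrightarrow> finite V \<and> (\<forall>e\<in>E. \<exists>x y. x \<in> V \<and> y \<in> V \<and> x \<noteq> y \<and> e = {x, y})"

definition is_cycle :: "'a set set \<Rightarrow> 'a list \<Rightarrow> bool" where
  "is_cycle F vs \<longleftrightarrow> length vs \<ge> 3 \<and> distinct vs \<and>
     (\<forall>i < length vs. {vs ! i, vs ! ((i + 1) mod length vs)} \<in> F)"

definition acyclic_edges :: "'a set set \<Rightarrow> bool" where
  "acyclic_edges F \<longleftrightarrow> (\<nexists>vs. is_cycle F vs)"

definition spanning_forest :: "'a set \<Rightarrow> 'a set set \<Rightarrow> 'a set set \<Rightarrow> bool" where
  "spanning_forest V E F \<longleftrightarrow> F \<subseteq> E \<and> acyclic_edges F"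

definition reach :: "'a set set \<Rightarrow> 'a \<Rightarrow> 'a \<Rightarrow> bool" where
  "reach F x y \<longleftrightarrow> (x, y) \<in> {(a, b). {a, b} \<in> F}\<^sup>*"

definition spanning_rooted_forests :: "'a set \<Rightarrow> 'a set set \<Rightarrow> ('a set set \<times> 'a set) set" where
  "spanning_rooted_forests V E =
     {(F, R). spanning_forest V E F \<and> R \<subseteq> V \<and> (\<forall>v\<in>V. \<exists>!r. r \<in> R \<and> reach F v r)}"

definition rooted_forests_uu :: "'a set \<Rightarrow> 'a set set \<Rightarrow> 'a \<Rightarrow> ('a set set \<times> 'a set) set" where
  "rooted_forests_uu V E u = {(F, R) \<in> spanning_rooted_forests V E. u \<in> R}"

definition S_u :: "'a set \<Rightarrow> 'a set set \<Rightarrow> 'a \<Rightarrow> (('a set set \<times> 'a set) \<times> 'a) set" where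
  "S_u V E u = {(FR, v). FR \<in> rooted_forests_uu V E u \<and> v \<in> V \<and> reach (fst FR) u v}"

end

theory Submission
  imports Defs
begin

lemma reach_refl: "reach F x x"
  unfolding reach_def by simp

lemma reach_sym: "reach F x y \<Longrightarrow> reach F y x"
proof -
  have s: "sym {(a, b). {a, b} \<in> F}" by (auto simp: sym_def insert_commute)
  assume "reach F x y"
  then show ?thesis unfolding reach_def using sym_rtrancl[OF s] by (auto dest: symD)
qed

lemma reach_trans: "reach F x y \<Longrightarrow> reach F y z \<Longrightarrow> reach F x z"
  unfolding reach_def by (rule rtrancl_trans)

lemma ex1_same: "\<exists>!x. P x \<Longrightarrow> P a \<Longrightarrow> P b \<Longrightarrow> a = b"
  by blast

lemma swap_root:
  assumes "(F, R) \<in> spanning_rooted_forests V E" "a \<in> R" "b \<in> V" "reach F a b"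
  shows "(F, insert b (R - {a})) \<in> spanning_rooted_forests V E"
proof -
  have H: "spanning_forest V E F \<and> R \<subseteq> V \<and> (\<forall>v\<in>V. \<exists>!r. r \<in> R \<and> reach F v r)"
    using assms(1) unfolding spanning_rooted_forests_def by simp
  have sf: "spanning_forest V E F" using H by (rule conjunct1)
  have RV: "R \<subseteq> V" using H by (metis conjunct1 conjunct2)
  have U0: "\<forall>v\<in>V. \<exists>!r. r \<in> R \<and> reach F v r" using H by (metis conjunct2)
  have U: "\<exists>!r. r \<in> R \<and> reach F v r" if "v \<in> V" for v using that by (rule bspec[OF U0])
  have "\<exists>!r. r \<in> insert b (R - {a}) \<and> reach F w r" if w: "w \<in> V" for w
  proof (cases "reach F w a")
    case True
    have wb: "reach F w b" using reach_trans[OF True assms(4)] .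
    show ?thesis
    proof (rule ex1I[of _ b])
      show "b \<in> insert b (R - {a}) \<and> reach F w b" using wb by simp
    next
      fix r assume r: "r \<in> insert b (R - {a}) \<and> reach F w r"
      show "r = b"
      proof (rule ccontr)
        assume "r \<noteq> b"
        then have "r \<in> R" "r \<noteq> a" using r by auto
        then show False using ex1_same[OF U[OF w], of r a] True r assms(2) by simp
      qed
    qed
  next
    case False
    obtain rw where rw: "rw \<in> R" "reach F w rw" using U[OF w] by (metis ex1_implies_ex)
    have "rw \<noteq> a" using rw False by blast
    have nb: "\<not> reach F w b"
    proof
      assume "reach F w b"
      then have "reach F w a" using reach_trans reach_sym[OF assms(4)] by metis
      then show False using False by simp
    qed
    show ?thesis
    proof (rule ex1I[of _ rw])
      show "rw \<in> insert b (R - {a}) \<and> reach F w rw" using rw \<open>rw \<noteq> a\<close> by simp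
    next
      fix r assume r: "r \<in> insert b (R - {a}) \<and> reach F w r"
      then have "r \<in> R" using nb by auto
      then show "r = rw" using ex1_same[OF U[OF w], of r rw] r rw by simp
    qed
  qed
  then show ?thesis using sf RV assms(3) unfolding spanning_rooted_forests_def by auto
qed

theorem lemma4p4:
  fixes V :: "'a set" and E :: "'a set set" and u :: 'a
  assumes "simple_graph V E" and "u \<in> V"
  shows "card (S_u V E u) = card (spanning_rooted_forests V E)"
proof -
  define g where "g = (\<lambda>((F::'a set set, R::'a set), v::'a). (F, insert v (R - {u})))"
  have key: "\<And>F R r. (F, R) \<in> spanning_rooted_forests V E \<Longrightarrow> r \<in> R \<Longrightarrow> reach F u r \<Longrightarrow>
      \<forall>x\<in>R. reach F u x \<longrightarrow> x = r"
    using assms(2) unfolding spanning_rooted_forests_def by blast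
  have inj: "inj_on g (S_u V E u)"
  proof (rule inj_onI)
    fix x y assume x: "x \<in> S_u V E u" and y: "y \<in> S_u V E u" and e: "g x = g y"
    obtain F R v where xd: "x = ((F, R), v)" by (metis prod.collapse)
    obtain F' R' v' where yd: "y = ((F', R'), v')" by (metis prod.collapse)
    have FF: "F' = F" and I: "insert v (R - {u}) = insert v' (R' - {u})"
      using e xd yd unfolding g_def by auto
    have s1: "(F, R) \<in> spanning_rooted_forests V E" "u \<in> R" "reach F u v"
      using x xd unfolding S_u_def rooted_forests_uu_def by auto
    have s2: "(F, R') \<in> spanning_rooted_forests V E" "u \<in> R'" "reach F u v'"
      using y yd FF unfolding S_u_def rooted_forests_uu_def by auto
    have k1: "\<forall>z\<in>R. reach F u z \<longrightarrow> z = u" using key[OF s1(1) s1(2) reach_refl] .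
    have k2: "\<forall>z\<in>R'. reach F u z \<longrightarrow> z = u" using key[OF s2(1) s2(2) reach_refl] .
    have vv: "v = v'"
    proof (rule ccontr)
      assume "v \<noteq> v'"
      then have "v \<in> R' - {u}" using I by blast
      then show False using k2 s1(3) by blast
    qed
    have "v \<notin> R - {u}" using k1 s1(3) by blast
    moreover have "v \<notin> R' - {u}" using k2 s2(3) vv by blast
    ultimately have "R - {u} = R' - {u}" using I vv by (metis Diff_insert_absorb)
    then have "R = R'" using s1(2) s2(2) by blast
    then show "x = y" using xd yd FF vv by simp
  qed
  have img: "g ` S_u V E u = spanning_rooted_forests V E"
  proof
    show "g ` S_u V E u \<subseteq> spanning_rooted_forests V E"
    proof
      fix z assume "z \<in> g ` S_u V E u"
      then obtain F R v where s: "((F, R), v) \<in> S_u V E u" and z: "z = g ((F, R), v)"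
        by (metis imageE prod.collapse)
      have s1: "(F, R) \<in> spanning_rooted_forests V E" "u \<in> R" "reach F u v" "v \<in> V"
        using s unfolding S_u_def rooted_forests_uu_def by auto
      show "z \<in> spanning_rooted_forests V E" using swap_root[OF s1(1) s1(2) s1(4) s1(3)] z
        unfolding g_def by simp
    qed
  next
    show "spanning_rooted_forests V E \<subseteq> g ` S_u V E u"
    proof
      fix z assume z: "z \<in> spanning_rooted_forests V E"
      obtain F R where zd: "z = (F, R)" by (metis prod.collapse)
      have zz: "(F, R) \<in> spanning_rooted_forests V E" using z zd by simp
      obtain r where r: "r \<in> R" "reach F u r"
        using zz assms(2) unfolding spanning_rooted_forests_def by blast
      have rV: "r \<in> V" using zz r unfolding spanning_rooted_forests_def by auto
      have k: "\<forall>x\<in>R. reach F u x \<longrightarrow> x = r" using key[OF zz r] .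
      have m: "(F, insert u (R - {r})) \<in> spanning_rooted_forests V E"
        using swap_root[OF zz r(1) assms(2) reach_sym[OF r(2)]] .
      have "((F, insert u (R - {r})), r) \<in> S_u V E u"
        using m r rV unfolding S_u_def rooted_forests_uu_def by auto
      moreover have "g ((F, insert u (R - {r})), r) = z"
      proof -
        have "insert r (insert u (R - {r}) - {u}) = R"
        proof -
          have "u \<in> R \<Longrightarrow> u = r" using k reach_refl[of F u] by blast
          then show ?thesis using r(1) by auto
        qed
        then show ?thesis unfolding g_def zd by simp
      qed
      ultimately show "z \<in> g ` S_u V E u" by (metis imageI)
    qed
  qed
  have "card (g ` S_u V E u) = card (S_u V E u)" by (rule card_image[OF inj])
  then show ?thesis unfolding img by (rule sym)
qed

end
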